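(* If $(\Lambda,Y)$ is an extensible graph with parameters $(t,s,\bar s)$, then its complementary graph $(\bar\Lambda,Y)$ is also extensible, and its parameters $(\bar t,s',\bar s')$ satisfy $s'=\bar s$, $\bar s'=s$ and $t+\bar t=s+\bar s-2=s'+\bar s'-2$.
   Context: A finite simple graph $(\Lambda,Y)$ is extensible with parameters $(t,s,\bar s)$ (nonnegative integers) if: (1) $\Lambda$ has diameter $2$; (2) for every $y\in Y$, with $\Lambda(y,d)$ the set of vertices at distance $d$ from $y$: (a) $|\Lambda(y,1)|=2s$; (b) $|\Lambda(y,2)|=2\bar s$; (c) every $z\in\Lambda(y,1)$ is adjacent to exactly $\bar s$ points of $\Lambda(y,2)$ and exactly $t=2s-\bar s-1$ points of $\Lambda(y,1)$; (d) every $z\in\Lambda(y,2)$ is adjacent to exactly $s$ points of $\Lambda(y,2)$ and exactly $s$ points of $\Lambda(y,1)$; (3) every edge lies in exactly $t$ triangles; (4) $|Y|=1+2s+2\bar s$. The complementary graph $(\bar\Lambda,Y)$ has vertex set $Y$ and as edges the non-edges of $\Lambda$. *)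

theory Defs
  imports Main
begin

definition simple_graph :: "('a \<Rightarrow> 'a \<Rightarrow> bool) \<Rightarrow> 'a set \<Rightarrow> bool" where
  "simple_graph E Y \<longleftrightarrow> finite Y \<and> (\<forall>x y. E x y \<longrightarrow> x \<in> Y \<and> y \<in> Y)
     \<and> (\<forall>x y. E x y \<longrightarrow> E y x) \<and> (\<forall>x. \<not> E x x)"

definition walk :: "('a \<Rightarrow> 'a \<Rightarrow> bool) \<Rightarrow> 'a set \<Rightarrow> nat \<Rightarrow> 'a \<Rightarrow> 'a \<Rightarrow> bool" where
  "walk E Y n x y \<longleftrightarrow> (\<exists>f :: nat \<Rightarrow> 'a. f 0 = x \<and> f n = y \<and> (\<forall>i\<le>n. f i \<in> Y)
     \<and> (\<forall>i<n. E (f i) (f (Suc i))))"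

definition connected_to :: "('a \<Rightarrow> 'a \<Rightarrow> bool) \<Rightarrow> 'a set \<Rightarrow> 'a \<Rightarrow> 'a \<Rightarrow> bool" where
  "connected_to E Y x y \<longleftrightarrow> (\<exists>n. walk E Y n x y)"

text \<open>Graph distance (meaningful when x and y are connected).\<close>
definition gdist :: "('a \<Rightarrow> 'a \<Rightarrow> bool) \<Rightarrow> 'a set \<Rightarrow> 'a \<Rightarrow> 'a \<Rightarrow> nat" where
  "gdist E Y x y = (LEAST n. walk E Y n x y)"

definition diameter2 :: "('a \<Rightarrow> 'a \<Rightarrow> bool) \<Rightarrow> 'a set \<Rightarrow> bool" where
  "diameter2 E Y \<longleftrightarrow> (\<forall>x\<in>Y. \<forall>y\<in>Y. connected_to E Y x y \<and> gdist E Y x y \<le> 2)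
     \<and> (\<exists>x\<in>Y. \<exists>y\<in>Y. gdist E Y x y = 2)"

definition sphere :: "('a \<Rightarrow> 'a \<Rightarrow> bool) \<Rightarrow> 'a set \<Rightarrow> 'a \<Rightarrow> nat \<Rightarrow> 'a set" where
  "sphere E Y y d = {z \<in> Y. connected_to E Y y z \<and> gdist E Y y z = d}"

definition extensible :: "('a \<Rightarrow> 'a \<Rightarrow> bool) \<Rightarrow> 'a set \<Rightarrow> nat \<Rightarrow> nat \<Rightarrow> nat \<Rightarrow> bool" where
  "extensible E Y t s sb \<longleftrightarrow>
     simple_graph E Y \<and>
     int t = 2 * int s - int sb - 1 \<and>
     diameter2 E Y \<and>
     (\<forall>y\<in>Y.
        card (sphere E Y y 1) = 2 * s \<and>
        card (sphere E Y y 2) = 2 * sb \<and>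
        (\<forall>z\<in>sphere E Y y 1.
           card {w \<in> sphere E Y y 2. E z w} = sb \<and>
           card {w \<in> sphere E Y y 1. E z w} = t) \<and>
        (\<forall>z\<in>sphere E Y y 2.
           card {w \<in> sphere E Y y 2. E z w} = s \<and>
           card {w \<in> sphere E Y y 1. E z w} = s)) \<and>
     (\<forall>x y. E x y \<longrightarrow> card {z \<in> Y. E x z \<and> E y z} = t) \<and>
     card Y = 1 + 2 * s + 2 * sb"

definition compl_graph :: "('a \<Rightarrow> 'a \<Rightarrow> bool) \<Rightarrow> 'a set \<Rightarrow> 'a \<Rightarrow> 'a \<Rightarrow> bool" where
  "compl_graph E Y x y \<longleftrightarrow> x \<in> Y \<and> y \<in> Y \<and> x \<noteq> y \<and> \<not> E x y"

end

theory Submission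
  imports Defs
begin

lemma walk0: "walk E Y 0 x y \<longleftrightarrow> x = y \<and> x \<in> Y"
  unfolding walk_def
  apply (rule iffI)
   apply force
  apply (rule exI[of _ "\<lambda>_. x"]) by auto

lemma walk1: "walk E Y 1 x y \<longleftrightarrow> x \<in> Y \<and> y \<in> Y \<and> E x y"
  unfolding walk_def
  apply (rule iffI)
   apply (metis One_nat_def le_refl less_one zero_le)
  apply (rule exI[of _ "\<lambda>i. if i = 0 then x else y"]) by auto

lemma walk2: "walk E Y 2 x y \<longleftrightarrow> x \<in> Y \<and> y \<in> Y \<and> (\<exists>z\<in>Y. E x z \<and> E z y)"
  unfolding walk_def
proof (rule iffI)
  assume "\<exists>f. f 0 = x \<and> f 2 = y \<and> (\<forall>i\<le>2. f i \<in> Y) \<and> (\<forall>i<2. E (f i) (f (Suc i)))"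
  then obtain f where f: "f 0 = x" "f 2 = y" "\<forall>i\<le>2. f i \<in> Y" "\<forall>i<2. E (f i) (f (Suc i))" by blast
  have "E (f 0) (f 1)" using f(4) by (metis One_nat_def less_2_cases_iff)
  moreover have "E (f 1) (f 2)" using f(4) by (metis One_nat_def Suc_1 lessI)
  moreover have "f 1 \<in> Y" using f(3) by simp
  ultimately show "x \<in> Y \<and> y \<in> Y \<and> (\<exists>z\<in>Y. E x z \<and> E z y)" using f by auto
next
  assume "x \<in> Y \<and> y \<in> Y \<and> (\<exists>z\<in>Y. E x z \<and> E z y)"
  then obtain z where z: "x \<in> Y" "y \<in> Y" "z \<in> Y" "E x z" "E z y" by blast
  show "\<exists>f. f 0 = x \<and> f 2 = y \<and> (\<forall>i\<le>2. f i \<in> Y) \<and> (\<forall>i<2. E (f i) (f (Suc i)))"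
    apply (rule exI[of _ "\<lambda>i. if i = 0 then x else if i = 1 then z else y"])
    using z by (auto simp: less_2_cases_iff)
qed

definition PP :: "('a \<Rightarrow> 'a \<Rightarrow> bool) \<Rightarrow> 'a set \<Rightarrow> bool" where
  "PP E Y \<longleftrightarrow> (\<forall>x\<in>Y. \<forall>y\<in>Y. x = y \<or> E x y \<or> (\<exists>z\<in>Y. E x z \<and> E z y))"

lemma diam_PP: assumes "diameter2 E Y" shows "PP E Y"
  unfolding PP_def
proof (intro ballI)
  fix x y assume xy: "x \<in> Y" "y \<in> Y"
  then have c: "connected_to E Y x y" "gdist E Y x y \<le> 2" using assms unfolding diameter2_def by auto
  then obtain n where "walk E Y n x y" unfolding connected_to_def by blast
  then have w: "walk E Y (gdist E Y x y) x y" unfolding gdist_def by (rule LeastI)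
  have "gdist E Y x y = 0 \<or> gdist E Y x y = 1 \<or> gdist E Y x y = 2" using c(2) by linarith
  then show "x = y \<or> E x y \<or> (\<exists>z\<in>Y. E x z \<and> E z y)"
  proof (elim disjE)
    assume "gdist E Y x y = 0" then show ?thesis using w walk0[of E Y x y] by simp
  next
    assume "gdist E Y x y = 1" then show ?thesis using w walk1[of E Y x y] by simp
  next
    assume "gdist E Y x y = 2" then show ?thesis using w walk2[of E Y x y] by simp
  qed
qed

lemma gdist_char:
  assumes irr: "\<And>x. \<not> E x x" and x: "x \<in> Y" and y: "y \<in> Y"
    and d: "x = y \<or> E x y \<or> (\<exists>z\<in>Y. E x z \<and> E z y)"
  shows "connected_to E Y x y \<and> gdist E Y x y = (if x = y then 0 else if E x y then 1 else 2)"
proof (cases "x = y")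
  case True
  then have w: "walk E Y 0 x y" using x by (simp add: walk0)
  have "(LEAST n. walk E Y n x y) = 0" by (rule Least_equality) (rule w, simp)
  then show ?thesis using True w unfolding connected_to_def gdist_def by auto
next
  case ne: False
  show ?thesis
  proof (cases "E x y")
    case True
    then have w: "walk E Y 1 x y" using x y walk1[of E Y x y] by simp
    have "(LEAST n. walk E Y n x y) = 1"
    proof (rule Least_equality)
      fix m assume m: "walk E Y m x y"
      show "1 \<le> m"
      proof (rule ccontr)
        assume "\<not> 1 \<le> m" then have "m = 0" by simp
        then show False using m ne walk0[of E Y x y] by simp
      qed
    qed (rule w)
    then have "connected_to E Y x y \<and> gdist E Y x y = 1"
      using w unfolding connected_to_def gdist_def by blast
    then show ?thesis using ne True by simp
  next
    case False
    then have w: "walk E Y 2 x y" using x y d ne walk2[of E Y x y] by simp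
    have "(LEAST n. walk E Y n x y) = 2"
    proof (rule Least_equality)
      fix m assume m: "walk E Y m x y"
      show "2 \<le> m"
      proof (rule ccontr)
        assume "\<not> 2 \<le> m"
        then have "m = 0 \<or> m = 1" by linarith
        then show False
        proof
          assume "m = 0" then show False using m ne walk0[of E Y x y] by simp
        next
          assume "m = 1" then show False using m False walk1[of E Y x y] by simp
        qed
      qed
    qed (rule w)
    then have "connected_to E Y x y \<and> gdist E Y x y = 2"
      using w unfolding connected_to_def gdist_def by blast
    then show ?thesis using ne False by simp
  qed
qed

lemma gd_PP:
  assumes "simple_graph E Y" "PP E Y" "y \<in> Y" "z \<in> Y"
  shows "connected_to E Y y z \<and> gdist E Y y z = (if y = z then 0 else if E y z then 1 else 2)"
proof -
  have irr: "\<And>x. \<not> E x x" using assms(1) unfolding simple_graph_def by auto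
  have "y = z \<or> E y z \<or> (\<exists>w\<in>Y. E y w \<and> E w z)" using assms(2-4) unfolding PP_def by blast
  then show ?thesis by (rule gdist_char[OF irr assms(3,4)])
qed

lemma sphere1:
  assumes "simple_graph E Y" "PP E Y" "y \<in> Y"
  shows "sphere E Y y 1 = {z \<in> Y. E y z}"
proof -
  have irr: "\<And>x. \<not> E x x" using assms(1) unfolding simple_graph_def by auto
  have "z \<in> sphere E Y y 1 \<longleftrightarrow> z \<in> {z \<in> Y. E y z}" for z
  proof (cases "z \<in> Y")
    case True
    then have g: "connected_to E Y y z \<and> gdist E Y y z = (if y = z then 0 else if E y z then 1 else 2)"
      using gd_PP[OF assms] by blast
    show ?thesis
    proof (cases "y = z")
      case True then show ?thesis using g irr unfolding sphere_def by simp
    next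
      case False then show ?thesis using g \<open>z \<in> Y\<close> unfolding sphere_def by simp
    qed
  qed (simp add: sphere_def)
  then show ?thesis by blast
qed

lemma sphere2:
  assumes "simple_graph E Y" "PP E Y" "y \<in> Y"
  shows "sphere E Y y 2 = {z \<in> Y. z \<noteq> y \<and> \<not> E y z}"
proof -
  have "z \<in> sphere E Y y 2 \<longleftrightarrow> z \<in> {z \<in> Y. z \<noteq> y \<and> \<not> E y z}" for z
  proof (cases "z \<in> Y")
    case True
    then have g: "connected_to E Y y z \<and> gdist E Y y z = (if y = z then 0 else if E y z then 1 else 2)"
      using gd_PP[OF assms] by blast
    show ?thesis
    proof (cases "y = z")
      case True then show ?thesis using g unfolding sphere_def by simp
    next
      case False then show ?thesis using g \<open>z \<in> Y\<close> unfolding sphere_def by auto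
    qed
  qed (simp add: sphere_def)
  then show ?thesis by blast
qed

lemma PP_diam:
  assumes "simple_graph E Y" "PP E Y" "x \<in> Y" "y \<in> Y" "x \<noteq> y" "\<not> E x y"
  shows "diameter2 E Y"
proof -
  have "\<forall>a\<in>Y. \<forall>b\<in>Y. connected_to E Y a b \<and> gdist E Y a b \<le> 2"
  proof (intro ballI)
    fix a b assume "a \<in> Y" "b \<in> Y"
    then have "connected_to E Y a b \<and> gdist E Y a b = (if a = b then 0 else if E a b then 1 else 2)"
      using gd_PP[OF assms(1,2)] by blast
    then show "connected_to E Y a b \<and> gdist E Y a b \<le> 2" by simp
  qed
  moreover have "gdist E Y x y = 2" using gd_PP[OF assms(1-4)] assms(5,6) by simp
  ultimately show ?thesis unfolding diameter2_def using assms(3,4) by blast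
qed

lemma card_split:
  assumes "finite A" shows "card {w \<in> A. \<not> Q w} + card {w \<in> A. Q w} = card A"
proof -
  have "A = {w \<in> A. \<not> Q w} \<union> {w \<in> A. Q w}" by auto
  then have "card A = card ({w \<in> A. \<not> Q w} \<union> {w \<in> A. Q w})" by simp
  also have "\<dots> = card {w \<in> A. \<not> Q w} + card {w \<in> A. Q w}"
    by (rule card_Un_disjoint) (use assms in auto)
  finally show ?thesis by simp
qed

lemma card_split2:
  assumes "finite A" "z \<in> A" "\<not> Q z"
  shows "card {w \<in> A. w \<noteq> z \<and> \<not> Q w} + card {w \<in> A. Q w} + 1 = card A"
proof -
  have "card {w \<in> A - {z}. \<not> Q w} + card {w \<in> A - {z}. Q w} = card (A - {z})"
    using assms(1) by (intro card_split) simp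
  moreover have "{w \<in> A - {z}. \<not> Q w} = {w \<in> A. w \<noteq> z \<and> \<not> Q w}" by auto
  moreover have "{w \<in> A - {z}. Q w} = {w \<in> A. Q w}" using assms(3) by auto
  moreover have "card (A - {z}) + 1 = card A" using assms(1,2)
    by (metis One_nat_def Suc_pred card.remove card_Diff_singleton card_gt_0_iff empty_iff add.commute plus_1_eq_Suc)
  ultimately show ?thesis by simp
qed

theorem proposition6:
  fixes E :: "'a \<Rightarrow> 'a \<Rightarrow> bool" and Y :: "'a set" and t s sb :: nat
  assumes "extensible E Y t s sb"
  shows "(\<exists>tb. extensible (compl_graph E Y) Y tb sb s)
    \<and> (\<forall>tb s' sb'. extensible (compl_graph E Y) Y tb s' sb' \<longrightarrow>
         s' = sb \<and> sb' = s \<and>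
         int t + int tb = int s + int sb - 2 \<and> int t + int tb = int s' + int sb' - 2)"
proof -
  note ext = assms[unfolded extensible_def]
  have sg: "simple_graph E Y" using ext by blast
  have tdef: "int t = 2 * int s - int sb - 1" using ext by blast
  have diam: "diameter2 E Y" using ext by blast
  have loc: "\<forall>y\<in>Y.
        card (sphere E Y y 1) = 2 * s \<and>
        card (sphere E Y y 2) = 2 * sb \<and>
        (\<forall>z\<in>sphere E Y y 1.
           card {w \<in> sphere E Y y 2. E z w} = sb \<and>
           card {w \<in> sphere E Y y 1. E z w} = t) \<and>
        (\<forall>z\<in>sphere E Y y 2.
           card {w \<in> sphere E Y y 2. E z w} = s \<and>
           card {w \<in> sphere E Y y 1. E z w} = s)" using ext by blast
  have cardY: "card Y = 1 + 2 * s + 2 * sb" using ext by blast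
  have fin: "finite Y" and inY: "\<And>x y. E x y \<Longrightarrow> x \<in> Y \<and> y \<in> Y"
    and sym: "\<And>x y. E x y \<Longrightarrow> E y x" and irr: "\<And>x. \<not> E x x"
    using sg unfolding simple_graph_def by auto
  have PPE: "PP E Y" using diam by (rule diam_PP)
  define S1 where "S1 y = {z \<in> Y. E y z}" for y
  define S2 where "S2 y = {z \<in> Y. z \<noteq> y \<and> \<not> E y z}" for y
  have sp1: "sphere E Y y 1 = S1 y" if "y \<in> Y" for y
    using sphere1[OF sg PPE that] unfolding S1_def .
  have sp2: "sphere E Y y 2 = S2 y" if "y \<in> Y" for y
    using sphere2[OF sg PPE that] unfolding S2_def .
  have finS1: "finite (S1 y)" for y unfolding S1_def using fin by simp
  have finS2: "finite (S2 y)" for y unfolding S2_def using fin by simp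
  have L1: "card (S1 y) = 2 * s" if "y \<in> Y" for y using loc that sp1 by metis
  have L2: "card (S2 y) = 2 * sb" if "y \<in> Y" for y using loc that sp2 by metis
  have L3a: "card {w \<in> S2 y. E z w} = sb" if "y \<in> Y" "z \<in> S1 y" for y z
    using loc that sp1 sp2 by metis
  have L3b: "card {w \<in> S1 y. E z w} = t" if "y \<in> Y" "z \<in> S1 y" for y z
    using loc that sp1 sp2 by metis
  have L4a: "card {w \<in> S2 y. E z w} = s" if "y \<in> Y" "z \<in> S2 y" for y z
    using loc that sp1 sp2 by metis
  have L4b: "card {w \<in> S1 y. E z w} = s" if "y \<in> Y" "z \<in> S2 y" for y z
    using loc that sp1 sp2 by metis
  obtain x0 y0 where x0: "x0 \<in> Y" and y0: "y0 \<in> Y" and g2: "gdist E Y x0 y0 = 2"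
    using diam unfolding diameter2_def by blast
  have gg: "gdist E Y x0 y0 = (if x0 = y0 then 0 else if E x0 y0 then 1 else 2)"
    using gd_PP[OF sg PPE x0 y0] by blast
  have x0y0: "x0 \<noteq> y0" "\<not> E x0 y0" using gg g2 by (auto split: if_splits)
  have y0S2: "y0 \<in> S2 x0" unfolding S2_def using y0 x0y0 by auto
  have K2: "card {w \<in> S2 y. w \<noteq> z \<and> \<not> E z w} + s + 1 = 2 * sb" if "y \<in> Y" "z \<in> S2 y" for y z
    using card_split2[OF finS2 that(2), of "E z"] irr L4a[OF that] L2[OF that(1)] by simp
  have big: "s + 1 \<le> 2 * sb" using K2[OF x0 y0S2] by linarith
  define tb where "tb = 2 * sb - s - 1"
  have tbint: "int tb = 2 * int sb - int s - 1" using big unfolding tb_def by linarith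
  have K2': "card {w \<in> S2 y. w \<noteq> z \<and> \<not> E z w} = tb" if "y \<in> Y" "z \<in> S2 y" for y z
    using K2[OF that] unfolding tb_def by linarith
  have K1: "card {w \<in> S1 y. w \<noteq> z \<and> \<not> E z w} = sb" if "y \<in> Y" "z \<in> S1 y" for y z
  proof -
    have "card {w \<in> S1 y. w \<noteq> z \<and> \<not> E z w} + t + 1 = 2 * s"
      using card_split2[OF finS1 that(2), of "E z"] irr L3b[OF that] L1[OF that(1)] by simp
    then show ?thesis using tdef by linarith
  qed
  have N1: "card {w \<in> S1 y. \<not> E z w} = s" if "y \<in> Y" "z \<in> S2 y" for y z
    using card_split[OF finS1[of y], of "E z"] L4b[OF that] L1[OF that(1)] by simp
  have N2: "card {w \<in> S2 y. \<not> E z w} = sb" if "y \<in> Y" "z \<in> S1 y" for y z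
    using card_split[OF finS2[of y], of "E z"] L3a[OF that] L2[OF that(1)] by simp
  define C where "C = compl_graph E Y"
  have Cdef: "C x y \<longleftrightarrow> x \<in> Y \<and> y \<in> Y \<and> x \<noteq> y \<and> \<not> E x y" for x y
    unfolding C_def compl_graph_def by simp
  have sgC: "simple_graph C Y" unfolding simple_graph_def Cdef using fin sym by blast
  have sbpos: "sb \<ge> 1" using big by linarith
  have PPC: "PP C Y"
    unfolding PP_def
  proof (intro ballI)
    fix x y assume x: "x \<in> Y" and y: "y \<in> Y"
    show "x = y \<or> C x y \<or> (\<exists>z\<in>Y. C x z \<and> C z y)"
    proof (cases "x = y \<or> \<not> E x y")
      case True then show ?thesis using Cdef x y by blast
    next
      case False
      then have xy: "E x y" "x \<noteq> y" by auto
      have "y \<in> S1 x" unfolding S1_def using y xy by simp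
      then have "card {w \<in> S2 x. \<not> E y w} = sb" using N2 x by blast
      then have "{w \<in> S2 x. \<not> E y w} \<noteq> {}" using sbpos by (metis card.empty not_one_le_zero)
      then obtain w where w: "w \<in> S2 x" "\<not> E y w" by blast
      then have "w \<in> Y" "w \<noteq> x" "\<not> E x w" unfolding S2_def by auto
      moreover have "w \<noteq> y" using xy \<open>\<not> E x w\<close> by auto
      ultimately have "C x w \<and> C w y" using Cdef x y w(2) sym by blast
      then show ?thesis using \<open>w \<in> Y\<close> by blast
    qed
  qed
  obtain w0 where w0: "w0 \<in> Y" "E x0 w0"
    using PPE x0 y0 x0y0 unfolding PP_def by blast
  have diamC: "diameter2 C Y"
    using PP_diam[OF sgC PPC x0 w0(1)] irr w0 Cdef by metis
  have spC1: "sphere C Y y 1 = S2 y" if "y \<in> Y" for y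
    using sphere1[OF sgC PPC that] unfolding S2_def Cdef using that by auto
  have spC2: "sphere C Y y 2 = S1 y" if "y \<in> Y" for y
    using sphere2[OF sgC PPC that] unfolding S1_def Cdef using that irr by auto
  have e1: "{w \<in> S1 y. C z w} = {w \<in> S1 y. \<not> E z w}" if "y \<in> Y" "z \<in> S2 y" for y z
    using that unfolding Cdef S1_def S2_def by auto
  have e2: "{w \<in> S2 y. C z w} = {w \<in> S2 y. w \<noteq> z \<and> \<not> E z w}" if "y \<in> Y" "z \<in> S2 y" for y z
    using that unfolding Cdef S1_def S2_def by auto
  have e3: "{w \<in> S2 y. C z w} = {w \<in> S2 y. \<not> E z w}" if "y \<in> Y" "z \<in> S1 y" for y z
    using that unfolding Cdef S1_def S2_def by auto
  have e4: "{w \<in> S1 y. C z w} = {w \<in> S1 y. w \<noteq> z \<and> \<not> E z w}" if "y \<in> Y" "z \<in> S1 y" for y z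
    using that unfolding Cdef S1_def S2_def by auto
  have tri: "card {z \<in> Y. C x z \<and> C y z} = tb" if "C x y" for x y
  proof -
    have x: "x \<in> Y" and yS: "y \<in> S2 x" using that unfolding Cdef S2_def by auto
    have "{z \<in> Y. C x z \<and> C y z} = {w \<in> S2 x. w \<noteq> y \<and> \<not> E y w}"
      using that unfolding Cdef S2_def by auto
    then show ?thesis using K2'[OF x yS] by simp
  qed
  have extC: "extensible C Y tb sb s"
    unfolding extensible_def
  proof (intro conjI ballI allI impI)
    show "simple_graph C Y" by (rule sgC)
    show "int tb = 2 * int sb - int s - 1" by (rule tbint)
    show "diameter2 C Y" by (rule diamC)
    show "card Y = 1 + 2 * sb + 2 * s" using cardY by simp
    fix y assume y: "y \<in> Y"
    show "card (sphere C Y y 1) = 2 * sb" using spC1[OF y] L2[OF y] by simp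
    show "card (sphere C Y y 2) = 2 * s" using spC2[OF y] L1[OF y] by simp
    {
      fix z assume "z \<in> sphere C Y y 1"
      then have z: "z \<in> S2 y" using spC1[OF y] by simp
      show "card {w \<in> sphere C Y y 2. C z w} = s" using spC2[OF y] e1[OF y z] N1[OF y z] by simp
      show "card {w \<in> sphere C Y y 1. C z w} = tb" using spC1[OF y] e2[OF y z] K2'[OF y z] by simp
    }
    {
      fix z assume "z \<in> sphere C Y y 2"
      then have z: "z \<in> S1 y" using spC2[OF y] by simp
      show "card {w \<in> sphere C Y y 2. C z w} = sb" using spC2[OF y] e4[OF y z] K1[OF y z] by simp
      show "card {w \<in> sphere C Y y 1. C z w} = sb" using spC1[OF y] e3[OF y z] N2[OF y z] by simp
    }
  next
    fix x y assume "C x y"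
    then show "card {z \<in> Y. C x z \<and> C y z} = tb" by (rule tri)
  qed
  have part2: "s' = sb \<and> sb' = s \<and>
         int t + int tb' = int s + int sb - 2 \<and> int t + int tb' = int s' + int sb' - 2"
    if h: "extensible C Y tb' s' sb'" for tb' s' sb'
  proof -
    have a: "card (sphere C Y x0 1) = 2 * s'" "card (sphere C Y x0 2) = 2 * sb'"
      and b: "int tb' = 2 * int s' - int sb' - 1"
      using h x0 unfolding extensible_def by auto
    have "s' = sb" using a(1) spC1[OF x0] L2[OF x0] by simp
    moreover have "sb' = s" using a(2) spC2[OF x0] L1[OF x0] by simp
    ultimately show ?thesis using b tdef by linarith
  qed
  show ?thesis using extC part2 unfolding C_def by blast
qed

end
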